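(* In the search model described in the context, let $\sigma^\ast=(L_1,L_2,\ldots)$ be an optimal search strategy. Then there do not exist intervals $L,L''\subseteq[0,1)$ with $\mu(L)>0$, $\mu(L'')>0$ and $\inf L>\sup L''$ such that $L$ is searched under $\sigma^\ast$ (i.e., $L\subseteq L_t$ for some $t$) and $L''$ is never searched (i.e., $L''\cap L_t=\emptyset$ for all $t$).
   Context: A single agent searches for an innovation among research projects $J=[0,1)$. In each period $t=1,2,\ldots$ the agent may examine an arbitrary Lebesgue-measurable set $S\subseteq J$ at cost $C(S)=\int_S c(j)\,dj$, where $c:[0,1)\to\mathbb{R}$ is continuous, strictly increasing, and satisfies $\lim_{j\to 1}c(j)=\infty$. With probability $p\in(0,1)$ the innovation is feasible, in which case there is a single successful project $\hat j\in J$, distributed uniformly on $J$; examining $\hat j$ yields a success of value $v>0$, examining any other project yields nothing. With probability $1-p$ no project is successful. Payoffs and costs are discounted by $\delta\in(0,1)$ per period. A search strategy is a sequence $\sigma=(L_1,L_2,\ldots)$ of (possibly empty) measurable subsets of $[0,1)$, where $L_t$ is the set examined in period $t$ if no success occurred in periods $1,\ldots,t-1$; search ends once a success occurs. Let $S_t=\bigcup_{t'<t}L_{t'}$. The agent's payoff from $\sigma$ is $\mathbb{E}\big[\sum_{t\ge1}\delta^{t-1}\big(v\cdot\mathbf{1}\{\text{success in period } t\}-C(L_t)\cdot\mathbf{1}\{\text{no success before period } t\}\big)\big]$, where success in period $t$ means $\hat j$ exists, $\hat j\in L_t$ and $\hat j\notin S_t$. A strategy is optimal if it maximizes this payoff;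 $\mu$ denotes Lebesgue measure. *)

theory Defs
  imports "HOL-Analysis.Analysis"
begin

text \<open>Cost of examining a measurable set S: the Lebesgue integral of c over S,
  as an extended real (positive part minus negative part; may be +infinity).\<close>
definition search_cost :: "(real \<Rightarrow> real) \<Rightarrow> real set \<Rightarrow> ereal" where
  "search_cost c S =
     enn2ereal (\<integral>\<^sup>+ x. indicator S x * ennreal (c x) \<partial>lebesgue)
   - enn2ereal (\<integral>\<^sup>+ x. indicator S x * ennreal (- c x) \<partial>lebesgue)"

text \<open>Admissible strategies: sequences of Lebesgue measurable subsets of [0,1).
  Index t :: nat = 0,1,2,... corresponds to period t+1 of the paper.\<close>
definition strategy :: "(nat \<Rightarrow> real set) \<Rightarrow> bool" where
  "strategy Ls \<longleftrightarrow> (\<forall>t. Ls t \<in> sets lebesgue \<and> Ls t \<subseteq> {0..<1})"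

definition searched_before :: "(nat \<Rightarrow> real set) \<Rightarrow> nat \<Rightarrow> real set" where
  "searched_before Ls t = (\<Union>t'<t. Ls t')"

text \<open>Expected discounted payoff contribution of (0-indexed) period t:
  success in period t has probability p * mu(L_t - S_t); no success before t
  has probability 1 - p * mu(S_t).\<close>
definition period_payoff ::
  "(real \<Rightarrow> real) \<Rightarrow> real \<Rightarrow> real \<Rightarrow> real \<Rightarrow> (nat \<Rightarrow> real set) \<Rightarrow> nat \<Rightarrow> ereal" where
  "period_payoff c p v \<delta> Ls t =
     ereal (\<delta> ^ t * v * p * measure lebesgue (Ls t - searched_before Ls t))
   - ereal (\<delta> ^ t * (1 - p * measure lebesgue (searched_before Ls t))) * search_cost c (Ls t)"

text \<open>Total expected payoff: sum of positive parts minus sum of negative parts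
  (the positive parts are summable, so this is the value of the series in the
  extended reals).\<close>
definition payoff ::
  "(real \<Rightarrow> real) \<Rightarrow> real \<Rightarrow> real \<Rightarrow> real \<Rightarrow> (nat \<Rightarrow> real set) \<Rightarrow> ereal" where
  "payoff c p v \<delta> Ls =
     (\<Sum>t. max 0 (period_payoff c p v \<delta> Ls t)) - (\<Sum>t. max 0 (- period_payoff c p v \<delta> Ls t))"

definition optimal_strategy ::
  "(real \<Rightarrow> real) \<Rightarrow> real \<Rightarrow> real \<Rightarrow> real \<Rightarrow> (nat \<Rightarrow> real set) \<Rightarrow> bool" where
  "optimal_strategy c p v \<delta> Ls \<longleftrightarrow>
     strategy Ls \<and> (\<forall>Ls'. strategy Ls' \<longrightarrow> payoff c p v \<delta> Ls' \<le> payoff c p v \<delta> Ls)"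

end

theory Submission
  imports Defs
begin

definition Ip :: "(real \<Rightarrow> real) \<Rightarrow> real set \<Rightarrow> ennreal" where
  "Ip f Z = (\<integral>\<^sup>+ x. indicator Z x * ennreal (f x) \<partial>lebesgue)"

lemma search_cost_Ip: "search_cost c S = enn2ereal (Ip c S) - enn2ereal (Ip (\<lambda>x. - c x) S)"
  by (simp add: search_cost_def Ip_def)

lemma borel_to_lebesgue: "f \<in> borel_measurable borel \<Longrightarrow> (f::real\<Rightarrow>real) \<in> borel_measurable lebesgue"
  by (rule measurable_completion) (simp only: measurable_lborel2)

lemma Ip_add:
  assumes "continuous_on {0..<1} f" "Z1 \<in> sets lebesgue" "Z2 \<in> sets lebesgue"
    "Z1 \<inter> Z2 = {}" "Z1 \<union> Z2 \<subseteq> {0..<1}"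
  shows "Ip f (Z1 \<union> Z2) = Ip f Z1 + Ip f Z2"
proof -
  define g where "g x = indicator {0..<1::real} x *\<^sub>R f x" for x
  have "g \<in> borel_measurable borel" unfolding g_def
    by (rule borel_measurable_continuous_on_indicator) (auto simp: assms)
  hence gm[measurable]: "g \<in> borel_measurable lebesgue" by (rule borel_to_lebesgue)
  have eq: "indicator Z x * ennreal (f x) = indicator Z x * ennreal (g x)" if "Z \<subseteq> {0..<1}" for Z x
    using that by (cases "x \<in> Z") (auto simp: g_def)
  have pt: "indicator (Z1 \<union> Z2) x * ennreal (f x) = indicator Z1 x * ennreal (g x) + indicator Z2 x * ennreal (g x)" for x
  proof (cases "x \<in> Z1")
    case True
    then have "x \<notin> Z2" "x \<in> {0..<1}" using assms(4,5) by auto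
    then show ?thesis using True by (simp add: g_def)
  next
    case False
    then show ?thesis
    proof (cases "x \<in> Z2")
      case True
      then have "x \<in> {0..<1}" using assms(5) by auto
      then show ?thesis using True False by (simp add: g_def)
    qed simp
  qed
  have m1: "(\<lambda>x. indicator Z1 x * ennreal (g x)) \<in> borel_measurable lebesgue"
    using assms(2) by measurable
  have m2: "(\<lambda>x. indicator Z2 x * ennreal (g x)) \<in> borel_measurable lebesgue"
    using assms(3) by measurable
  have "Ip f (Z1 \<union> Z2) = (\<integral>\<^sup>+ x. indicator Z1 x * ennreal (g x) + indicator Z2 x * ennreal (g x) \<partial>lebesgue)"
    unfolding Ip_def pt ..
  also have "\<dots> = (\<integral>\<^sup>+ x. indicator Z1 x * ennreal (g x) \<partial>lebesgue) + (\<integral>\<^sup>+ x. indicator Z2 x * ennreal (g x) \<partial>lebesgue)"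
    using m1 m2 by (rule nn_integral_add)
  also have "\<dots> = Ip f Z1 + Ip f Z2"
    unfolding Ip_def using assms(5) by (simp add: eq[of Z1] eq[of Z2])
  finally show ?thesis .
qed

lemma Ip_le:
  assumes "Z \<in> sets lebesgue" "\<And>x. x \<in> Z \<Longrightarrow> f x \<le> u"
  shows "Ip f Z \<le> ennreal u * emeasure lebesgue Z"
proof -
  have "Ip f Z \<le> (\<integral>\<^sup>+ x. ennreal u * indicator Z x \<partial>lebesgue)"
    unfolding Ip_def by (intro nn_integral_mono) (auto simp: indicator_def assms(2) ennreal_leI)
  also have "\<dots> = ennreal u * emeasure lebesgue Z" using assms(1) by (rule nn_integral_cmult_indicator)
  finally show ?thesis .
qed

lemma Ip_ge:
  assumes "Z \<in> sets lebesgue" "\<And>x. x \<in> Z \<Longrightarrow> u \<le> f x"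
  shows "ennreal u * emeasure lebesgue Z \<le> Ip f Z"
proof -
  have "ennreal u * emeasure lebesgue Z = (\<integral>\<^sup>+ x. ennreal u * indicator Z x \<partial>lebesgue)"
    using assms(1) by (rule nn_integral_cmult_indicator[symmetric])
  also have "\<dots> \<le> Ip f Z"
    unfolding Ip_def by (intro nn_integral_mono) (auto simp: indicator_def assms(2) ennreal_leI)
  finally show ?thesis .
qed

lemma ennreal_mult_max: "0 \<le> (\<mu>::real) \<Longrightarrow> ennreal u * ennreal \<mu> = ennreal (max 0 u * \<mu>)"
  using ennreal_max_0 ennreal_mult'' by presburger

lemma ennreal_le_real: "(x::ennreal) \<le> ennreal h \<Longrightarrow> \<exists>r. x = ennreal r \<and> 0 \<le> r"
  by (metis le_zero_eq le_ennreal_iff ennreal_le_iff2 dual_order.refl ennreal_0)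

lemma Ip_real:
  assumes "Z \<in> sets lebesgue" "emeasure lebesgue Z = ennreal \<mu>" "0 \<le> \<mu>"
    "\<And>x. x \<in> Z \<Longrightarrow> lo \<le> f x" "\<And>x. x \<in> Z \<Longrightarrow> f x \<le> hi"
  shows "\<exists>r. Ip f Z = ennreal r \<and> max 0 lo * \<mu> \<le> r \<and> r \<le> max 0 hi * \<mu> \<and> 0 \<le> r"
proof -
  have u: "Ip f Z \<le> ennreal (max 0 hi * \<mu>)"
    using Ip_le[OF assms(1,5)] assms(2,3) ennreal_mult_max by simp
  have l: "ennreal (max 0 lo * \<mu>) \<le> Ip f Z"
    using Ip_ge[OF assms(1,4)] assms(2,3) ennreal_mult_max by simp
  obtain r where r: "Ip f Z = ennreal r" "0 \<le> r"
    using ennreal_le_real[OF u] by blast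
  have "0 \<le> max 0 hi * \<mu>" using assms(3) by simp
  then show ?thesis using u l r
    by (intro exI[of _ r]) (auto simp: ennreal_le_iff)
qed

lemma measure_le_1:
  fixes Z :: "real set"
  assumes "Z \<in> sets lebesgue" "Z \<subseteq> {0..<1}"
  shows "measure lebesgue Z \<le> 1"
proof -
  have "{0..<1::real} \<in> lmeasurable" by (intro bounded_set_imp_lmeasurable) auto
  then show ?thesis using measure_mono_fmeasurable[of Z "{0..<1::real}" lebesgue] assms by auto
qed

lemma two_points:
  fixes L :: "real set"
  assumes "measure lebesgue L > 0"
  shows "\<exists>x y. x \<in> L \<and> y \<in> L \<and> x < y"
proof (rule ccontr)
  assume neg: "\<not> ?thesis"
  show False
  proof (cases "L = {}")
    case True thus False using assms by simp
  next
    case False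
    then obtain x where x: "x \<in> L" by blast
    have "L = {x}"
    proof
      show "L \<subseteq> {x}"
      proof
        fix y assume "y \<in> L"
        with x neg have "y = x" by (cases y x rule: linorder_cases) auto
        thus "y \<in> {x}" by simp
      qed
    qed (use x in simp)
    thus False using assms by simp
  qed
qed

lemma emeasure_le_1:
  fixes Z :: "real set"
  assumes "Z \<in> sets lebesgue" "Z \<subseteq> {0..<1}"
  shows "emeasure lebesgue Z \<le> 1"
proof -
  have "emeasure lebesgue Z \<le> emeasure lebesgue {0..<1::real}"
    using assms by (intro emeasure_mono) auto
  also have "\<dots> = 1" by simp
  finally show ?thesis .
qed

lemma Ip_neg_finite:
  fixes c :: "real \<Rightarrow> real"
  assumes "Z \<in> sets lebesgue" "Z \<subseteq> {0..<1}" "\<And>x. x \<in> Z \<Longrightarrow> c 0 \<le> c x"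
  shows "Ip (\<lambda>x. - c x) Z \<le> ennreal (max 0 (- c 0))"
proof -
  have "Ip (\<lambda>x. - c x) Z \<le> ennreal (- c 0) * emeasure lebesgue Z"
    using assms by (intro Ip_le) auto
  also have "\<dots> \<le> ennreal (- c 0) * 1"
    using emeasure_le_1[OF assms(1,2)] by (intro mult_left_mono) auto
  finally show ?thesis by (simp add: ennreal_max_0)
qed

lemma cost_swap:
  fixes c :: "real \<Rightarrow> real" and a b m :: real and Y :: "real set"
  assumes cont: "continuous_on {0..<1} c"
    and mono: "\<And>x y. x \<in> {0..<1} \<Longrightarrow> y \<in> {0..<1} \<Longrightarrow> x \<le> y \<Longrightarrow> c x \<le> c y"
    and ab: "0 \<le> b" "b + m < a" "a + m < 1" "0 \<le> m"
    and Y: "Y \<in> sets lebesgue" "Y \<subseteq> {0..<1}" "Y \<inter> {b..b+m} = {}"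
  shows "search_cost c ((Y - {a..a+m}) \<union> (\<lambda>x. x - (a-b)) ` (Y \<inter> {a..a+m}))
           + ereal ((c a - c (b+m)) * measure lebesgue (Y \<inter> {a..a+m})) \<le> search_cost c Y"
proof -
  define A where "A = {a..a+m}"
  define B where "B = {b..b+m}"
  define R where "R = Y - A"
  define Z where "Z = Y \<inter> A"
  define Z' where "Z' = (\<lambda>x. x - (a-b)) ` Z"
  have AB: "A \<subseteq> {0..<1}" "B \<subseteq> {0..<1}" using ab by (auto simp: A_def B_def)
  have Rm: "R \<in> sets lebesgue" using Y by (auto simp: R_def A_def)
  have Zm: "Z \<in> sets lebesgue" unfolding Z_def A_def using Y(1) by (intro sets.Int) auto
  have Zl: "Z \<in> lmeasurable"
    by (rule bounded_set_imp_lmeasurable[OF bounded_subset[of A] Zm]) (auto simp: Z_def A_def)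
  have Z'l: "Z' \<in> lmeasurable" unfolding Z'_def by (rule measurable_translation_subtract[OF Zl])
  have Z'm: "Z' \<in> sets lebesgue" using Z'l by (simp add: fmeasurable_def)
  define \<mu> where "\<mu> = measure lebesgue Z"
  have muZ': "measure lebesgue Z' = \<mu>" by (simp add: Z'_def \<mu>_def measure_translation_subtract)
  have Z'B: "Z' \<subseteq> B" by (auto simp: Z'_def Z_def A_def B_def)
  have ZA: "Z \<subseteq> A" by (auto simp: Z_def)
  have disj: "R \<inter> Z' = {}" "R \<inter> Z = {}" using Z'B Y(3) by (auto simp: R_def Z_def B_def)
  have Yeq: "Y = R \<union> Z" by (auto simp: R_def Z_def)
  have sub: "R \<union> Z \<subseteq> {0..<1}" "R \<union> Z' \<subseteq> {0..<1}" using Y(2) Z'B AB by (auto simp: R_def Z_def)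
  have eZ: "emeasure lebesgue Z = ennreal \<mu>" using Zl by (simp add: \<mu>_def emeasure_eq_measure2)
  have eZ': "emeasure lebesgue Z' = ennreal \<mu>" using Z'l muZ' by (simp add: emeasure_eq_measure2)
  have mu0: "0 \<le> \<mu>" by (simp add: \<mu>_def)
  have a01: "a \<in> {0..<1}" "a + m \<in> {0..<1}" "b \<in> {0..<1}" "b + m \<in> {0..<1}" using ab by auto
  have cZ: "c a \<le> c x" "c x \<le> c (a+m)" if "x \<in> Z" for x
    using that ZA AB a01 by (auto simp: A_def intro!: mono)
  have cZ': "c b \<le> c x" "c x \<le> c (b+m)" if "x \<in> Z'" for x
    using that Z'B AB a01 by (auto simp: B_def intro!: mono)
  obtain p1 where p1: "Ip c Z = ennreal p1" "max 0 (c a) * \<mu> \<le> p1" "p1 \<le> max 0 (c (a+m)) * \<mu>" "0 \<le> p1"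
    using Ip_real[OF Zm eZ mu0, of "c a" c "c (a+m)"] cZ by blast
  obtain n1 where n1: "Ip (\<lambda>x. - c x) Z = ennreal n1" "max 0 (- c (a+m)) * \<mu> \<le> n1" "n1 \<le> max 0 (- c a) * \<mu>" "0 \<le> n1"
    using Ip_real[OF Zm eZ mu0, of "- c (a+m)" "\<lambda>x. - c x" "- c a"] cZ by force
  obtain p2 where p2: "Ip c Z' = ennreal p2" "max 0 (c b) * \<mu> \<le> p2" "p2 \<le> max 0 (c (b+m)) * \<mu>" "0 \<le> p2"
    using Ip_real[OF Z'm eZ' mu0, of "c b" c "c (b+m)"] cZ' by blast
  obtain n2 where n2: "Ip (\<lambda>x. - c x) Z' = ennreal n2" "max 0 (- c (b+m)) * \<mu> \<le> n2" "n2 \<le> max 0 (- c b) * \<mu>" "0 \<le> n2"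
    using Ip_real[OF Z'm eZ' mu0, of "- c (b+m)" "\<lambda>x. - c x" "- c b"] cZ' by force
  have Rsub: "R \<subseteq> {0..<1}" using sub by auto
  have "Ip (\<lambda>x. - c x) R \<le> ennreal (max 0 (- c 0))"
    using Rm Rsub by (intro Ip_neg_finite) (auto intro!: mono)
  then obtain n0 where n0: "Ip (\<lambda>x. - c x) R = ennreal n0" "0 \<le> n0"
    using ennreal_le_real by blast
  have contn: "continuous_on {0..<1} (\<lambda>x. - c x)" using cont by (intro continuous_intros)
  have CY: "search_cost c Y = enn2ereal (Ip c R + ennreal p1) - enn2ereal (ennreal n0 + ennreal n1)"
    unfolding search_cost_Ip Yeq Ip_add[OF cont Rm Zm disj(2) sub(1)] Ip_add[OF contn Rm Zm disj(2) sub(1)]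
    using p1 n1 n0 by simp
  have CT: "search_cost c (R \<union> Z') = enn2ereal (Ip c R + ennreal p2) - enn2ereal (ennreal n0 + ennreal n2)"
    unfolding search_cost_Ip Ip_add[OF cont Rm Z'm disj(1) sub(2)] Ip_add[OF contn Rm Z'm disj(1) sub(2)]
    using p2 n2 n0 by simp
  have h1: "max 0 (c a) * \<mu> - max 0 (- c a) * \<mu> = c a * \<mu>" by (simp add: max_def algebra_simps)
  have h2: "max 0 (c (b+m)) * \<mu> - max 0 (- c (b+m)) * \<mu> = c (b+m) * \<mu>" by (simp add: max_def algebra_simps)
  have key: "p2 - n2 + (c a - c (b+m)) * \<mu> \<le> p1 - n1"
    using p1 n1 p2 n2 h1 h2 by (simp add: algebra_simps)
  have main: "search_cost c (R \<union> Z') + ereal ((c a - c (b+m)) * \<mu>) \<le> search_cost c Y"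
  proof (cases "Ip c R = \<infinity>")
    case True
    then show ?thesis unfolding CY CT by simp
  next
    case False
    then obtain q where q: "Ip c R = ennreal q" "0 \<le> q" by (metis ennreal_cases infinity_ennreal_def)
    have "search_cost c (R \<union> Z') = ereal ((q + p2) - (n0 + n2))"
      unfolding CT q(1) using q(2) p2(4) n2(4) n0(2) by (simp flip: ennreal_plus)
    moreover have "search_cost c Y = ereal ((q + p1) - (n0 + n1))"
      unfolding CY q(1) using q(2) p1(4) n1(4) n0(2) by (simp flip: ennreal_plus)
    ultimately show ?thesis using key by simp
  qed
  then show ?thesis by (simp add: R_def Z'_def Z_def A_def \<mu>_def)
qed

lemma ereal_maxswap:
  fixes x y :: ereal
  assumes "x + ereal e \<le> y" "0 \<le> e"
  shows "max 0 x + max 0 (-y) + ereal e \<le> max 0 y + max 0 (-x)"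
  using assms by (cases x; cases y) (auto simp: max_def split: if_splits)

lemma pp_cmp:
  fixes C C' :: ereal
  assumes "0 < w" "C' + ereal e \<le> C" "0 \<le> e"
  shows "ereal g - ereal w * C + ereal (w*e) \<le> ereal g - ereal w * C'"
proof -
  have aux: "\<And>r ra. ra + e \<le> r \<Longrightarrow> ra * w + e * w \<le> r * w"
    using assms(1) by (metis distrib_right less_eq_real_def mult_right_mono)
  show ?thesis using assms aux by (cases C; cases C') (auto simp: algebra_simps)
qed

lemma pp_upper:
  fixes C :: ereal
  assumes "0 \<le> w" "w \<le> D" "- ereal K \<le> C" "0 \<le> K" "g \<le> G"
  shows "ereal g - ereal w * C \<le> ereal (G + D*K)"
proof (cases C)
  case (real r)
  then have "-K \<le> r" using assms(3) by simp
  then have "w * (-K) \<le> w * r" using assms(1) by (intro mult_left_mono) auto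
  moreover have "w * K \<le> D * K" using assms(2,4) by (intro mult_right_mono) auto
  ultimately show ?thesis using real assms(5) by simp
next
  case PInf
  have "0 \<le> D * K" using assms by simp
  then show ?thesis using PInf assms(1,5) by (cases "w = 0") auto
next
  case MInf
  then show ?thesis using assms(3) by simp
qed

lemma cost_lower:
  fixes c :: "real \<Rightarrow> real"
  assumes "Y \<in> sets lebesgue" "Y \<subseteq> {0..<1}" "\<And>x. x \<in> Y \<Longrightarrow> c 0 \<le> c x"
  shows "- ereal (max 0 (- c 0)) \<le> search_cost c Y"
proof -
  have "Ip (\<lambda>x. - c x) Y \<le> ennreal (max 0 (- c 0))" using assms by (rule Ip_neg_finite)
  then have i1: "enn2ereal (Ip (\<lambda>x. - c x) Y) \<le> ereal (max 0 (- c 0))"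
    by (metis enn2ereal_ennreal less_eq_ennreal.rep_eq max.cobounded1)
  have i2: "0 \<le> enn2ereal (Ip c Y)" by simp
  have "0 - ereal (max 0 (- c 0)) \<le> enn2ereal (Ip c Y) - enn2ereal (Ip (\<lambda>x. - c x) Y)"
    by (rule ereal_minus_mono[OF i2 i1])
  then show ?thesis unfolding search_cost_Ip by simp
qed

definition swapT :: "real \<Rightarrow> real \<Rightarrow> real \<Rightarrow> real set \<Rightarrow> real set" where
  "swapT a b m Y = (Y - {a..a+m}) \<union> (\<lambda>x. x - (a-b)) ` (Y \<inter> {a..a+m})"

lemma swapT_UN: "swapT a b m (\<Union>i\<in>I. Y i) = (\<Union>i\<in>I. swapT a b m (Y i))"
  unfolding swapT_def by blast

lemma swapT_diff:
  assumes "b + m < a" "Y \<inter> {b..b+m} = {}" "Z \<inter> {b..b+m} = {}"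
  shows "swapT a b m Y - swapT a b m Z = swapT a b m (Y - Z)"
proof -
  have img: "x - (a - b) \<in> {b..b+m}" if "x \<in> {a..a+m}" for x using that by auto
  show ?thesis unfolding swapT_def
  proof (intro equalityI subsetI)
    fix x assume x: "x \<in> (Y - {a..a+m}) \<union> (\<lambda>x. x - (a-b)) ` (Y \<inter> {a..a+m}) -
                      ((Z - {a..a+m}) \<union> (\<lambda>x. x - (a-b)) ` (Z \<inter> {a..a+m}))"
    then show "x \<in> (Y - Z - {a..a+m}) \<union> (\<lambda>x. x - (a-b)) ` ((Y - Z) \<inter> {a..a+m})"
      by auto
  next
    fix x assume x: "x \<in> (Y - Z - {a..a+m}) \<union> (\<lambda>x. x - (a-b)) ` ((Y - Z) \<inter> {a..a+m})"
    then show "x \<in> (Y - {a..a+m}) \<union> (\<lambda>x. x - (a-b)) ` (Y \<inter> {a..a+m}) -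
                      ((Z - {a..a+m}) \<union> (\<lambda>x. x - (a-b)) ` (Z \<inter> {a..a+m}))"
    proof
      assume "x \<in> Y - Z - {a..a+m}"
      moreover have "x \<notin> {b..b+m}" using calculation assms(2) by auto
      ultimately show ?thesis using img by auto
    next
      assume "x \<in> (\<lambda>x. x - (a-b)) ` ((Y - Z) \<inter> {a..a+m})"
      then obtain y where y: "y \<in> Y" "y \<notin> Z" "y \<in> {a..a+m}" "x = y - (a-b)" by auto
      have "x \<in> {b..b+m}" using img y by auto
      then have "x \<notin> Z" using assms(3) by auto
      moreover have "x \<notin> (\<lambda>x. x - (a-b)) ` (Z \<inter> {a..a+m})" using y by auto
      ultimately show ?thesis using y by auto
    qed
  qed
qed

lemma swapT_props:
  fixes a b m :: real
  assumes ab: "0 \<le> b" "b + m < a" "a + m < 1" "0 \<le> m"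
    and Y: "Y \<in> sets lebesgue" "Y \<subseteq> {0..<1}" "Y \<inter> {b..b+m} = {}"
  shows "swapT a b m Y \<in> sets lebesgue" "swapT a b m Y \<subseteq> {0..<1}"
    "measure lebesgue (swapT a b m Y) = measure lebesgue Y"
proof -
  define A where "A = {a..a+m}"
  define B where "B = {b..b+m}"
  define R where "R = Y - A"
  define Z where "Z = Y \<inter> A"
  define Z' where "Z' = (\<lambda>x. x - (a-b)) ` Z"
  have T: "swapT a b m Y = R \<union> Z'" by (simp add: swapT_def R_def Z'_def Z_def A_def)
  have AB: "A \<subseteq> {0..<1}" "B \<subseteq> {0..<1}" using ab by (auto simp: A_def B_def)
  have Rm: "R \<in> sets lebesgue" using Y by (auto simp: R_def A_def)
  have Zm: "Z \<in> sets lebesgue" unfolding Z_def A_def using Y(1) by (intro sets.Int) auto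
  have Rl: "R \<in> lmeasurable"
    by (rule bounded_set_imp_lmeasurable[OF bounded_subset[of "{0..1}"] Rm]) (use Y(2) in \<open>auto simp: R_def\<close>)
  have Zl: "Z \<in> lmeasurable"
    by (rule bounded_set_imp_lmeasurable[OF bounded_subset[of A] Zm]) (auto simp: Z_def A_def)
  have Z'l: "Z' \<in> lmeasurable" unfolding Z'_def by (rule measurable_translation_subtract[OF Zl])
  have muZ': "measure lebesgue Z' = measure lebesgue Z" by (simp add: Z'_def measure_translation_subtract)
  have Z'B: "Z' \<subseteq> B" by (auto simp: Z'_def Z_def A_def B_def)
  have disj: "R \<inter> Z' = {}" "R \<inter> Z = {}" using Z'B Y(3) by (auto simp: R_def Z_def B_def)
  have Yeq: "Y = R \<union> Z" by (auto simp: R_def Z_def)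
  show "swapT a b m Y \<in> sets lebesgue" unfolding T using Rm Z'l by (auto simp: fmeasurable_def)
  show "swapT a b m Y \<subseteq> {0..<1}" unfolding T using Y(2) Z'B AB by (auto simp: R_def)
  have "measure lebesgue (R \<union> Z') = measure lebesgue R + measure lebesgue Z'"
    using measure_Un3[OF Rl Z'l] disj by simp
  moreover have "measure lebesgue (R \<union> Z) = measure lebesgue R + measure lebesgue Z"
    using measure_Un3[OF Rl Zl] disj by simp
  ultimately show "measure lebesgue (swapT a b m Y) = measure lebesgue Y"
    unfolding T using muZ' Yeq by simp
qed

lemma sb_props:
  assumes "strategy X"
  shows "searched_before X s \<in> sets lebesgue" "searched_before X s \<subseteq> {0..<1}"
  using assms unfolding searched_before_def strategy_def
  by (auto intro!: sets.finite_UN)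

lemma pp_bound:
  fixes c :: "real \<Rightarrow> real"
  assumes X: "strategy X"
    and mono: "\<And>x y. x \<in> {0..<1} \<Longrightarrow> y \<in> {0..<1} \<Longrightarrow> x \<le> y \<Longrightarrow> c x \<le> c y"
    and p: "0 < p" "p < 1" and v: "0 < v" and d: "0 < \<delta>"
  shows "period_payoff c p v \<delta> X s \<le> ereal (\<delta>^s * (v * p + max 0 (- c 0)))"
proof -
  define S where "S = searched_before X s"
  have Sm: "S \<in> sets lebesgue" "S \<subseteq> {0..<1}" using sb_props[OF X] by (auto simp: S_def)
  have Xm: "X s \<in> sets lebesgue" "X s \<subseteq> {0..<1}" using X by (auto simp: strategy_def)
  have muS: "measure lebesgue S \<le> 1" "0 \<le> measure lebesgue S" using measure_le_1[OF Sm] by auto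
  have muD: "measure lebesgue (X s - S) \<le> 1" using measure_le_1[of "X s - S"] Xm Sm by auto
  have pmu: "p * measure lebesgue S \<le> p" using muS p by (simp add: mult_left_le)
  have ds: "0 < \<delta>^s" using d by simp
  have "0 \<le> 1 - p * measure lebesgue S" using pmu p by linarith
  then have w0: "0 \<le> \<delta>^s * (1 - p * measure lebesgue S)" using ds by simp
  have wD: "\<delta>^s * (1 - p * measure lebesgue S) \<le> \<delta>^s" using ds p muS by (simp add: mult_left_le)
  have gG: "\<delta>^s * v * p * measure lebesgue (X s - S) \<le> \<delta>^s * v * p"
    using ds v p muD by (simp add: mult_left_le)
  have cl: "- ereal (max 0 (- c 0)) \<le> search_cost c (X s)"
    using Xm by (intro cost_lower) (auto intro!: mono)
  have "period_payoff c p v \<delta> X s \<le> ereal (\<delta>^s * v * p + \<delta>^s * max 0 (- c 0))"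
    unfolding period_payoff_def S_def[symmetric]
    by (rule pp_upper[OF w0 wD cl _ gG]) simp
  also have "\<dots> = ereal (\<delta>^s * (v * p + max 0 (- c 0)))" by (simp add: algebra_simps)
  finally show ?thesis .
qed

lemma P_finite:
  fixes c :: "real \<Rightarrow> real"
  assumes X: "strategy X"
    and mono: "\<And>x y. x \<in> {0..<1} \<Longrightarrow> y \<in> {0..<1} \<Longrightarrow> x \<le> y \<Longrightarrow> c x \<le> c y"
    and p: "0 < p" "p < 1" and v: "0 < v" and d: "0 < \<delta>" "\<delta> < 1"
  shows "(\<Sum>s. max 0 (period_payoff c p v \<delta> X s)) \<noteq> \<infinity>"
proof -
  define M where "M = v * p + max 0 (- c 0)"
  have M0: "0 \<le> M" using p v by (simp add: M_def)
  have sm: "summable (\<lambda>s. \<delta>^s * M)" using d by (intro summable_mult2 summable_geometric) auto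
  have "(\<Sum>s. max 0 (period_payoff c p v \<delta> X s)) \<le> (\<Sum>s. ereal (\<delta>^s * M))"
  proof (rule suminf_le_pos)
    fix s
    show "max 0 (period_payoff c p v \<delta> X s) \<le> ereal (\<delta>^s * M)"
      using pp_bound[where c=c and p=p and v=v and \<delta>=\<delta> and s=s, OF X mono p v d(1)] M0 d unfolding M_def by auto
    show "0 \<le> max 0 (period_payoff c p v \<delta> X s)" by simp
  qed
  also have "\<dots> = ereal (\<Sum>s. \<delta>^s * M)" using sm by (rule suminf_ereal')
  finally show ?thesis by auto
qed

lemma payoff_empty: "payoff c p v \<delta> (\<lambda>_. {}) = 0"
  unfolding payoff_def period_payoff_def searched_before_def search_cost_def by simp

theorem lemma2:
  fixes c :: "real \<Rightarrow> real" and p v \<delta> :: real and Ls :: "nat \<Rightarrow> real set"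
  assumes "continuous_on {0..<1} c"
    and "strict_mono_on {0..<1} c"
    and "filterlim c at_top (at_left 1)"
    and "0 < p" and "p < 1" and "0 < v" and "0 < \<delta>" and "\<delta> < 1"
    and "optimal_strategy c p v \<delta> Ls"
  shows "\<not> (\<exists>L L''. is_interval L \<and> is_interval L'' \<and>
            L \<subseteq> {0..<1} \<and> L'' \<subseteq> {0..<1} \<and>
            measure lebesgue L > 0 \<and> measure lebesgue L'' > 0 \<and>
            Inf L > Sup L'' \<and>
            (\<exists>t. L \<subseteq> Ls t) \<and> (\<forall>t. L'' \<inter> Ls t = {}))"
proof
  assume "\<exists>L L''. is_interval L \<and> is_interval L'' \<and>
            L \<subseteq> {0..<1} \<and> L'' \<subseteq> {0..<1} \<and>
            measure lebesgue L > 0 \<and> measure lebesgue L'' > 0 \<and>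
            Inf L > Sup L'' \<and>
            (\<exists>t. L \<subseteq> Ls t) \<and> (\<forall>t. L'' \<inter> Ls t = {})"
  then obtain L L'' t where L: "is_interval L" and L'': "is_interval L''"
    and Lsub: "L \<subseteq> {0..<1}" and L''sub: "L'' \<subseteq> {0..<1}"
    and mL: "measure lebesgue L > 0" and mL'': "measure lebesgue L'' > 0"
    and IS: "Inf L > Sup L''" and t: "L \<subseteq> Ls t" and never: "\<And>s. L'' \<inter> Ls s = {}"
    by blast
  have opt: "strategy Ls" "\<And>X. strategy X \<Longrightarrow> payoff c p v \<delta> X \<le> payoff c p v \<delta> Ls"
    using assms(9) by (auto simp: optimal_strategy_def)
  have mono: "\<And>x y. x \<in> {0..<1} \<Longrightarrow> y \<in> {0..<1} \<Longrightarrow> x \<le> y \<Longrightarrow> c x \<le> c y"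
    using strict_mono_on_leD[OF assms(2)] by blast
  obtain x1 y1 where x1: "x1 \<in> L" and y1: "y1 \<in> L" and xy1: "x1 < y1" using two_points[OF mL] by blast
  obtain x2 y2 where x2: "x2 \<in> L''" and y2: "y2 \<in> L''" and xy2: "x2 < y2" using two_points[OF mL''] by blast
  define m where "m = min (y1 - x1) (y2 - x2)"
  define a where "a = x1"
  define b where "b = x2"
  have m0: "0 < m" using xy1 xy2 by (simp add: m_def)
  have AL: "{a..a+m} \<subseteq> L"
  proof
    fix z assume "z \<in> {a..a+m}"
    then have "x1 \<le> z" "z \<le> y1" by (auto simp: a_def m_def)
    then show "z \<in> L" using L x1 y1 unfolding is_interval_1 by blast
  qed
  have BL: "{b..b+m} \<subseteq> L''"
  proof
    fix z assume "z \<in> {b..b+m}"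
    then have "x2 \<le> z" "z \<le> y2" by (auto simp: b_def m_def)
    then show "z \<in> L''" using L'' x2 y2 unfolding is_interval_1 by blast
  qed
  have bddA: "bdd_above L''" by (rule bdd_above_mono[OF _ L''sub]) simp
  have bddB: "bdd_below L" by (rule bdd_below_mono[OF _ Lsub]) simp
  have "y2 \<le> Sup L''" by (rule cSup_upper[OF y2 bddA])
  moreover have "Inf L \<le> x1" by (rule cInf_lower[OF x1 bddB])
  moreover have "b + m \<le> y2" by (simp add: b_def m_def)
  ultimately have ab2: "b + m < a" using IS by (simp add: a_def)
  have "a + m \<le> y1" by (simp add: a_def m_def)
  then have ab3: "a + m < 1" using y1 Lsub by auto
  have ab1: "0 \<le> b" using x2 L''sub by (auto simp: b_def)
  have ab4: "0 \<le> m" using m0 by simp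
  note abs = ab1 ab2 ab3 ab4
  have disjB: "Ls s \<inter> {b..b+m} = {}" for s using never[of s] BL by blast
  have At: "{a..a+m} \<subseteq> Ls t" using AL t by blast
  have LsS: "Ls s \<in> sets lebesgue" "Ls s \<subseteq> {0..<1}" for s using opt(1) by (auto simp: strategy_def)
  have SBm: "searched_before Ls s \<in> sets lebesgue" "searched_before Ls s \<subseteq> {0..<1}" for s
    using sb_props[OF opt(1)] by auto
  have SBd: "searched_before Ls s \<inter> {b..b+m} = {}" for s
    using disjB unfolding searched_before_def by blast
  define T where "T = swapT a b m"
  define Ls' where "Ls' s = T (Ls s)" for s
  have SB': "searched_before Ls' s = T (searched_before Ls s)" for s
    unfolding searched_before_def Ls'_def T_def by (simp add: swapT_UN)
  have D': "Ls' s - searched_before Ls' s = T (Ls s - searched_before Ls s)" for s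
    unfolding SB' Ls'_def T_def by (rule swapT_diff[OF ab2 disjB SBd])
  have strat': "strategy Ls'"
    unfolding strategy_def Ls'_def T_def using swapT_props(1,2)[OF abs LsS disjB] by auto
  have meas1: "measure lebesgue (Ls' s - searched_before Ls' s) = measure lebesgue (Ls s - searched_before Ls s)" for s
  proof -
    have "Ls s - searched_before Ls s \<in> sets lebesgue" using LsS SBm by auto
    moreover have "Ls s - searched_before Ls s \<subseteq> {0..<1}" using LsS by auto
    moreover have "(Ls s - searched_before Ls s) \<inter> {b..b+m} = {}" using disjB by auto
    ultimately show ?thesis unfolding D' T_def by (rule swapT_props(3)[OF abs])
  qed
  have meas2: "measure lebesgue (searched_before Ls' s) = measure lebesgue (searched_before Ls s)" for s
    unfolding SB' T_def by (rule swapT_props(3)[OF abs SBm SBd])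
  define \<epsilon> where "\<epsilon> = c a - c (b+m)"
  have eps: "0 < \<epsilon>" unfolding \<epsilon>_def using strict_mono_onD[OF assms(2), of "b+m" a] abs by auto
  define \<mu> where "\<mu> s = measure lebesgue (Ls s \<inter> {a..a+m})" for s
  have mu0: "0 \<le> \<mu> s" for s by (simp add: \<mu>_def)
  have mut: "\<mu> t = m" using At m0 by (simp add: \<mu>_def Int_absorb1)
  have cost: "search_cost c (Ls' s) + ereal (\<epsilon> * \<mu> s) \<le> search_cost c (Ls s)" for s
    using cost_swap[OF assms(1) mono abs LsS disjB] unfolding Ls'_def T_def swapT_def \<epsilon>_def \<mu>_def .
  define w where "w s = \<delta>^s * (1 - p * measure lebesgue (searched_before Ls s))" for s
  have w0: "0 < w s" for s
  proof -
    have "measure lebesgue (searched_before Ls s) \<le> 1" using measure_le_1[OF SBm] .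
    then have "p * measure lebesgue (searched_before Ls s) \<le> p" using assms(4) by (simp add: mult_left_le)
    then have "0 < 1 - p * measure lebesgue (searched_before Ls s)" using assms(5) by linarith
    then show ?thesis using assms(7) by (simp add: w_def)
  qed
  define e where "e s = w s * (\<epsilon> * \<mu> s)" for s
  have e0: "0 \<le> e s" for s using w0[of s] eps mu0[of s] by (simp add: e_def)
  have et: "0 < e t" using w0[of t] eps m0 mut by (simp add: e_def)
  define f where "f s = period_payoff c p v \<delta> Ls s" for s
  define f' where "f' s = period_payoff c p v \<delta> Ls' s" for s
  have ppcmp: "f s + ereal (e s) \<le> f' s" for s
  proof -
    have "ereal (\<delta> ^ s * v * p * measure lebesgue (Ls s - searched_before Ls s)) - ereal (w s) * search_cost c (Ls s)
            + ereal (w s * (\<epsilon> * \<mu> s))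
          \<le> ereal (\<delta> ^ s * v * p * measure lebesgue (Ls s - searched_before Ls s)) - ereal (w s) * search_cost c (Ls' s)"
      by (rule pp_cmp[OF w0 cost]) (use eps mu0 in simp)
    then show ?thesis unfolding f_def f'_def period_payoff_def meas1 meas2 e_def w_def .
  qed
  define P where "P = (\<Sum>s. max 0 (f s))"
  define N where "N = (\<Sum>s. max 0 (- f s))"
  define P' where "P' = (\<Sum>s. max 0 (f' s))"
  define N' where "N' = (\<Sum>s. max 0 (- f' s))"
  define E where "E = (\<Sum>s. ereal (e s))"
  have Pfin: "P \<noteq> \<infinity>" unfolding P_def f_def
    by (rule P_finite[OF opt(1) mono assms(4,5,6,7,8)])
  have P'fin: "P' \<noteq> \<infinity>" unfolding P'_def f'_def
    by (rule P_finite[OF strat' mono assms(4,5,6,7,8)])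
  have P0: "0 \<le> P" "0 \<le> P'" "0 \<le> N" "0 \<le> N'" "0 \<le> E"
    unfolding P_def P'_def N_def N'_def E_def using e0 by (auto intro!: suminf_0_le)
  have payLs: "payoff c p v \<delta> Ls = P - N" by (simp add: payoff_def P_def N_def f_def)
  have payLs': "payoff c p v \<delta> Ls' = P' - N'" by (simp add: payoff_def P'_def N'_def f'_def)
  have "strategy (\<lambda>_. {})" by (simp add: strategy_def)
  then have "0 \<le> P - N" using opt(2) payoff_empty payLs by metis
  then have Nfin: "N \<noteq> \<infinity>" using Pfin P0 by (cases P; cases N) auto
  have cmp: "P' - N' \<le> P - N" using opt(2)[OF strat'] payLs payLs' by simp
  have trm: "max 0 (f s) + max 0 (- f' s) + ereal (e s) \<le> max 0 (f' s) + max 0 (- f s)" for s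
    by (rule ereal_maxswap[OF ppcmp e0])
  have "(\<Sum>s. max 0 (f s) + max 0 (- f' s) + ereal (e s)) \<le> (\<Sum>s. max 0 (f' s) + max 0 (- f s))"
    by (rule suminf_le_pos[OF trm]) (simp add: e0)
  moreover have "(\<Sum>s. max 0 (f s) + max 0 (- f' s) + ereal (e s)) = P + N' + E"
  proof -
    have "(\<Sum>s. max 0 (f s) + max 0 (- f' s) + ereal (e s)) = (\<Sum>s. max 0 (f s) + max 0 (- f' s)) + E"
      unfolding E_def by (rule suminf_add_ereal) (auto simp: e0)
    also have "(\<Sum>s. max 0 (f s) + max 0 (- f' s)) = P + N'"
      unfolding P_def N'_def by (rule suminf_add_ereal) auto
    finally show ?thesis .
  qed
  moreover have "(\<Sum>s. max 0 (f' s) + max 0 (- f s)) = P' + N"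
    unfolding P'_def N_def by (rule suminf_add_ereal) auto
  ultimately have big: "P + N' + E \<le> P' + N" by simp
  have "ereal (e t) \<le> (\<Sum>s<Suc t. ereal (e s))"
    using member_le_sum[of t "{..<Suc t}" "\<lambda>s. ereal (e s)"] e0 by (auto simp: sum_nonneg)
  also have "\<dots> \<le> E" unfolding E_def by (rule suminf_upper) (simp add: e0)
  finally have Et: "ereal (e t) \<le> E" .
  show False
    using big cmp Et et P0 Pfin P'fin Nfin
    by (cases P; cases N; cases P'; cases N'; cases E) auto
qed

end
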